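(* Let $D$ be a sqrt-bounded degree function and consider a GSAT maintained under get, insert and delete operations with counter-based rebuilding. Not counting the time of searching inside a node, the amortized cost of an insert, delete or get operation is $O(\log m)$; that is, the total cost of the first $m$ operations is $O(m\log m)$.
   Context: A function $f$ is sqrt-bounded if $f(m)\ge 1$ for all $m$ and there is a constant $M^*$ with $f(m)\le\max(\sqrt m,M^* )$ for all $m$. A Generic Self-Adjusting Tree (GSAT) with degree function $D$ for a set of integer keys $X=\{x_1<\dots<x_n\}$ with access counts $ac_i\ge1$ consists of $m=\sum_i ac_i$, an array of $k\le\lceil D(m)\rceil$ representative keys $x_{i_1}<\dots<x_{i_k}$ with their access counts, and $k+1$ child subtrees that are GSATs for the keys strictly before $x_{i_1}$, strictly between consecutive representatives, and strictly after $x_{i_k}$. For a subtree $T'$, $m(T')$ is the total access count of keys in $T'$. A GSAT is ideal if each child $T_j$ of the root satisfies $m(T_j)\le m/(D(m)+1)$ and each child is ideal. Dynamic operations: each node $v$ (root of subtree $T_v$) has a counter $C(v)$ and a value $im(T_v)$ equal to $m(T_v)$ at the time $T_v$ was last (re)built. An operation get/insert/delete on key $x$ walks down from the root along the search path of $x$, increments $C(v)$ for every visited node and increments the access count of $x$ if found; insert of an absent key creates a new node holding $x$ with access count 1 attached as a child of the last visited node; delete only marks the key. Afterwards, among the visited nodes $v$ with $C(v)>im(T_v)/4$, the one $u$ of minimum depth (if any) is chosen and $T_u$ is rebuilt into an ideal GSAT for its unmarked keys with their current access counts, counters set to $0$ and $im$ values reset. Cost of an operation: number of visited nodes plus, if a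 rebuild happens, $O(m(T_u))$ for rebuilding $T_u$. *)

theory Defs
  imports Complex_Main
begin

text \<open>Degree functions are functions from total access counts (naturals) to reals.\<close>

definition sqrt_bounded :: "(nat \<Rightarrow> real) \<Rightarrow> bool" where
  "sqrt_bounded f \<longleftrightarrow> (\<forall>m. f m \<ge> 1) \<and> (\<exists>Mstar. \<forall>m. f m \<le> max (sqrt (real m)) Mstar)"

text \<open>An entry is (key, access count, marked-as-deleted).
  Node es cs C im: representative entries es (sorted by key), children cs
  (length es + 1 of them), counter C(v), and im(T_v).\<close>

type_synonym entry = "int \<times> nat \<times> bool"

datatype gsat = Leaf | Node "entry list" "gsat list" nat nat

datatype op = Get int | Ins int | Del int

fun op_key :: "op \<Rightarrow> int" where
  "op_key (Get x) = x" | "op_key (Ins x) = x" | "op_key (Del x) = x"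

fun mass :: "gsat \<Rightarrow> nat" where
  "mass Leaf = 0"
| "mass (Node es cs c im) = sum_list (map (\<lambda>e. fst (snd e)) es) + sum_list (map mass cs)"

fun entries :: "gsat \<Rightarrow> entry set" where
  "entries Leaf = {}"
| "entries (Node es cs c im) = set es \<union> \<Union> (set (map entries cs))"

fun ideal_gsat :: "(nat \<Rightarrow> real) \<Rightarrow> gsat \<Rightarrow> bool" where
  "ideal_gsat D Leaf = True"
| "ideal_gsat D (Node es cs c im) =
    (let m = mass (Node es cs c im) in
      es \<noteq> [] \<and> real (length es) \<le> of_int \<lceil>D m\<rceil> \<and> length cs = length es + 1
      \<and> sorted_wrt (<) (map fst es)
      \<and> (\<forall>j < length cs. real (mass (cs ! j)) \<le> real m / (D m + 1)
            \<and> (\<forall>e \<in> entries (cs ! j). (0 < j \<longrightarrow> fst (es ! (j - 1)) < fst e)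
                                    \<and> (j < length es \<longrightarrow> fst e < fst (es ! j))))
      \<and> (\<forall>ch \<in> set cs. ideal_gsat D ch))"

fun fresh :: "gsat \<Rightarrow> bool" where
  "fresh Leaf = True"
| "fresh (Node es cs c im) =
    ((\<forall>e \<in> set es. \<not> snd (snd e)) \<and> c = 0 \<and> im = mass (Node es cs c im)
     \<and> (\<forall>ch \<in> set cs. fresh ch))"

fun upd_entry :: "op \<Rightarrow> entry \<Rightarrow> entry" where
  "upd_entry (Get x) (k, a, mk) = (k, Suc a, mk)"
| "upd_entry (Ins x) (k, a, mk) = (k, Suc a, False)"
| "upd_entry (Del x) (k, a, mk) = (k, Suc a, True)"

definition child_index :: "int \<Rightarrow> entry list \<Rightarrow> nat" where
  "child_index x es = length (filter (\<lambda>e. fst e < x) es)"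

definition new_node :: "int \<Rightarrow> gsat" where
  "new_node x = Node [(x, 1, False)] [Leaf, Leaf] 0 1"

text \<open>Access walk (without rebuilding): acc op t t' v means the walk along the
  search path transforms t into t' and visits v nodes.\<close>
inductive acc :: "op \<Rightarrow> gsat \<Rightarrow> gsat \<Rightarrow> nat \<Rightarrow> bool" where
  acc_leaf_ins: "acc (Ins x) Leaf (new_node x) 0"
| acc_leaf_get: "acc (Get x) Leaf Leaf 0"
| acc_leaf_del: "acc (Del x) Leaf Leaf 0"
| acc_found: "\<lbrakk> i < length es; fst (es ! i) = op_key o' \<rbrakk> \<Longrightarrow>
     acc o' (Node es cs c im) (Node (es[i := upd_entry o' (es ! i)]) cs (Suc c) im) 1"
| acc_down: "\<lbrakk> \<forall>e \<in> set es. fst e \<noteq> op_key o'; j = child_index (op_key o') es; j < length cs;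
     acc o' (cs ! j) t' v \<rbrakk> \<Longrightarrow>
     acc o' (Node es cs c im) (Node es (cs[j := t']) (Suc c) im) (Suc v)"

text \<open>One operation with counter-based rebuilding; the last argument is its cost
  (visited nodes plus m(T_u) if T_u is rebuilt).  The first visited node (minimum depth)
  whose counter exceeds im/4 is rebuilt into an arbitrary fresh ideal GSAT of its
  unmarked keys with their current access counts.\<close>
inductive step :: "(nat \<Rightarrow> real) \<Rightarrow> op \<Rightarrow> gsat \<Rightarrow> gsat \<Rightarrow> nat \<Rightarrow> bool" where
  step_leaf: "acc o' Leaf t' 0 \<Longrightarrow> step D o' Leaf t' 0"
| step_rebuild: "\<lbrakk> real (Suc c) > real im / 4; acc o' (Node es cs c im) t2 v;
     ideal_gsat D R; fresh R; entries R = {e \<in> entries t2. \<not> snd (snd e)} \<rbrakk> \<Longrightarrow>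
     step D o' (Node es cs c im) R (v + mass t2)"
| step_found: "\<lbrakk> \<not> real (Suc c) > real im / 4; i < length es; fst (es ! i) = op_key o' \<rbrakk> \<Longrightarrow>
     step D o' (Node es cs c im) (Node (es[i := upd_entry o' (es ! i)]) cs (Suc c) im) 1"
| step_down: "\<lbrakk> \<not> real (Suc c) > real im / 4; \<forall>e \<in> set es. fst e \<noteq> op_key o';
     j = child_index (op_key o') es; j < length cs; step D o' (cs ! j) t' v \<rbrakk> \<Longrightarrow>
     step D o' (Node es cs c im) (Node es (cs[j := t']) (Suc c) im) (Suc v)"

inductive run :: "(nat \<Rightarrow> real) \<Rightarrow> gsat \<Rightarrow> op list \<Rightarrow> gsat \<Rightarrow> nat \<Rightarrow> bool" where
  run_nil: "run D t [] t 0"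
| run_cons: "\<lbrakk> step D o' t t1 c1; run D t1 ops t2 c2 \<rbrakk> \<Longrightarrow> run D t (o' # ops) t2 (c1 + c2)"

end

theory Submission imports Defs begin


abbreviation cnt :: "entry \<Rightarrow> nat" where "cnt e \<equiv> fst (snd e)"

fun imof :: "gsat \<Rightarrow> nat" where
  "imof Leaf = 0" | "imof (Node es cs c im) = im"

fun csum :: "gsat \<Rightarrow> nat" where
  "csum Leaf = 0" | "csum (Node es cs c im) = c + sum_list (map csum cs)"

fun good :: "gsat \<Rightarrow> bool" where
  "good Leaf = True"
| "good (Node es cs c im) = (4*c \<le> im \<and> 1 \<le> im \<and> mass (Node es cs c im) \<le> im + c \<and>
     (\<forall>ch\<in>set cs. 2*mass ch \<le> im + 2*c \<and> 2*imof ch \<le> im + 2*c \<and> good ch))"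

fun posc :: "gsat \<Rightarrow> bool" where
  "posc Leaf = True"
| "posc (Node es cs c im) = ((\<forall>e\<in>set es. 1 \<le> cnt e) \<and> (\<forall>ch\<in>set cs. posc ch))"

definition LL :: real where "LL = ln (4/3)"

fun g :: "gsat \<Rightarrow> real" where
  "g Leaf = 0" | "g (Node es cs c im) = 1 + ln (real im) / LL"

lemma LL_pos: "LL > 0" unfolding LL_def by simp

lemma posc_entries: "posc t \<longleftrightarrow> (\<forall>e\<in>entries t. 1 \<le> cnt e)"
  by (induction t) auto

lemma finite_entries: "finite (entries t)"
  by (induction t) auto

lemma sum_list_map_update:
  "i < length xs \<Longrightarrow> sum_list (map f (xs[i := x])) + f (xs ! i) = sum_list (map f xs) + (f x :: nat)"
  by (induction xs arbitrary: i) (auto split: nat.splits)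

lemma upd_cnt: "cnt (upd_entry o' e) = Suc (cnt e)"
  by (cases o'; cases e) auto

lemma upd_fst: "fst (upd_entry o' e) = fst e"
  by (cases o'; cases e) auto

lemma fresh_csum: "fresh t \<Longrightarrow> csum t = 0"
proof (induction t)
  case (Node es cs c im)
  then show ?case by (simp add: sum_list_eq_0_iff)
qed simp

lemma fresh_imof: "fresh t \<Longrightarrow> imof t = mass t"
  by (cases t) auto

lemma sum_set_le_list: "sum f (set xs) \<le> sum_list (map f xs)" for f :: "_ \<Rightarrow> nat"
  by (induction xs) (auto simp: sum.insert_if)

lemma sum_Union_le: "(\<forall>A\<in>set As. finite A) \<Longrightarrow> sum f (\<Union>(set As)) \<le> sum_list (map (sum f) As)" for f :: "_ \<Rightarrow> nat"
proof (induction As)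
  case (Cons A As)
  have "sum f (A \<union> \<Union>(set As)) \<le> sum f A + sum f (\<Union>(set As))"
    using sum.union_inter[of A "\<Union>(set As)" f] Cons.prems by auto
  then show ?case using Cons by auto
qed simp

lemma sum_entries_le: "sum cnt (entries t) \<le> mass t"
proof (induction t)
  case (Node es cs c im)
  have "sum cnt (entries (Node es cs c im)) \<le> sum cnt (set es) + sum cnt (\<Union>(set (map entries cs)))"
    using sum.union_inter[of "set es" "\<Union>(set (map entries cs))" cnt] finite_entries by auto
  also have "sum cnt (\<Union>(set (map entries cs))) \<le> sum_list (map (sum cnt) (map entries cs))"
    by (rule sum_Union_le) (auto simp: finite_entries)
  also have "\<dots> \<le> sum_list (map mass cs)"
    using Node by (auto intro: sum_list_mono simp: o_def)
  also have "sum cnt (set es) \<le> sum_list (map cnt es)" by (rule sum_set_le_list)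
  finally show ?case by simp
qed simp



lemma sorted_le:
  assumes "sorted_wrt (<) (map fst es)" "i \<le> k" "k < length es"
  shows "fst (es ! i) \<le> (fst (es ! k) :: int)"
proof (cases "i = k")
  case False
  then have "i < k" using assms by simp
  then show ?thesis using sorted_wrt_nth_less[OF assms(1), of i k] assms by simp
qed simp

lemma ideal_mass: "ideal_gsat D t \<Longrightarrow> mass t = sum cnt (entries t)"
proof (induction t)
  case Leaf
  then show ?case by simp
next
  case (Node es cs c im)
  let ?m = "mass (Node es cs c im)"
  from Node.prems have ne: "es \<noteq> []" and lcs: "length cs = length es + 1"
    and so: "sorted_wrt (<) (map fst es)"
    and ch: "\<And>j. j < length cs \<Longrightarrow> (\<forall>e \<in> entries (cs ! j). (0 < j \<longrightarrow> fst (es ! (j - 1)) < fst e)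
                                    \<and> (j < length es \<longrightarrow> fst e < fst (es ! j)))"
    and chi: "\<And>ch. ch \<in> set cs \<Longrightarrow> ideal_gsat D ch"
    by (auto simp: Let_def)
  have dist: "distinct es"
    using so by (metis distinct_map strict_sorted_iff)
  have disj: "entries (cs ! j) \<inter> entries (cs ! k) = {}" if "j < k" "k < length cs" for j k
  proof (rule ccontr)
    assume "entries (cs ! j) \<inter> entries (cs ! k) \<noteq> {}"
    then obtain e where e1: "e \<in> entries (cs ! j)" and e2: "e \<in> entries (cs ! k)" by blast
    have "fst e < fst (es ! j)" using ch[of j] e1 that lcs by auto
    moreover have "fst (es ! (k - 1)) < fst e" using ch[of k] e2 that by auto
    moreover have "fst (es ! j) \<le> fst (es ! (k - 1))" using sorted_le[OF so, of j "k - 1"] that lcs by auto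
    ultimately show False by simp
  qed
  have disj2: "set es \<inter> entries (cs ! j) = {}" if "j < length cs" for j
  proof (rule ccontr)
    assume "set es \<inter> entries (cs ! j) \<noteq> {}"
    then obtain e where e1: "e \<in> set es" and e2: "e \<in> entries (cs ! j)" by blast
    then obtain i where i: "i < length es" "e = es ! i" by (metis in_set_conv_nth)
    show False
    proof (cases "i < j")
      case True
      have "fst (es ! (j - 1)) < fst e" using ch[of j] e2 that True by auto
      moreover have "fst (es ! i) \<le> fst (es ! (j - 1))" using sorted_le[OF so, of i "j - 1"] True that lcs by auto
      ultimately show False using i by simp
    next
      case False
      have "fst e < fst (es ! j)" using ch[of j] e2 that False i by auto
      moreover have "fst (es ! j) \<le> fst (es ! i)" using sorted_le[OF so, of j i] False i by auto
      ultimately show False using i by simp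
    qed
  qed
  have U: "\<Union>(set (map entries cs)) = (\<Union>j\<in>{..<length cs}. entries (cs ! j))"
    by (auto simp: in_set_conv_nth) (metis nth_mem)
  have "sum_list (map mass cs) = (\<Sum>j<length cs. mass (cs ! j))"
    by (simp add: sum_list_sum_nth atLeast0LessThan)
  also have "\<dots> = (\<Sum>j<length cs. sum cnt (entries (cs ! j)))"
    using Node.IH chi by (auto intro!: sum.cong)
  also have "\<dots> = sum cnt (\<Union>j\<in>{..<length cs}. entries (cs ! j))"
  proof (rule sum.UNION_disjoint[symmetric])
    show "finite {..<length cs}" by simp
    show "\<forall>i\<in>{..<length cs}. finite (entries (cs ! i))" by (simp add: finite_entries)
    show "\<forall>i\<in>{..<length cs}. \<forall>j\<in>{..<length cs}. i \<noteq> j \<longrightarrow> entries (cs ! i) \<inter> entries (cs ! j) = {}"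
      using disj by (metis Int_commute lessThan_iff linorder_neqE_nat)
  qed
  finally have A: "sum_list (map mass cs) = sum cnt (\<Union>(set (map entries cs)))" using U by simp
  have B: "sum_list (map cnt es) = sum cnt (set es)"
    using dist by (simp add: sum_list_distinct_conv_sum_set)
  have C: "set es \<inter> \<Union>(set (map entries cs)) = {}"
    using disj2 U by auto
  have "sum cnt (set es \<union> \<Union>(set (map entries cs))) = sum cnt (set es) + sum cnt (\<Union>(set (map entries cs)))"
    by (rule sum.union_disjoint) (use C finite_entries in auto)
  then show ?case using A B by simp
qed



lemma fresh_unf: "fresh (Node es cs c im) \<Longrightarrow> (\<forall>e \<in> set es. \<not> snd (snd e)) \<and> c = 0 \<and> im = mass (Node es cs c im)
     \<and> (\<forall>ch \<in> set cs. fresh ch)"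
  using iffD1[OF fresh.simps(2)[of es cs c im]] .

lemma fresh_good:
  assumes D1: "\<forall>m. 1 \<le> D m"
  shows "ideal_gsat D t \<Longrightarrow> fresh t \<Longrightarrow> posc t \<Longrightarrow> good t"
proof (induction t)
  case Leaf
  then show ?case by simp
next
  case (Node es cs c im)
  let ?m = "mass (Node es cs c im)"
  from Node.prems(1) have ne: "es \<noteq> []" and lcs: "length cs = length es + 1"
    and chm: "\<And>j. j < length cs \<Longrightarrow> real (mass (cs ! j)) \<le> real ?m / (D ?m + 1)"
    and chi: "\<And>ch. ch \<in> set cs \<Longrightarrow> ideal_gsat D ch"
    unfolding ideal_gsat.simps Let_def by blast+
  from fresh_unf[OF Node.prems(2)] have c0: "c = 0" and imm: "im = ?m" and chf: "\<And>ch. ch \<in> set cs \<Longrightarrow> fresh ch"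
    by blast+
  from Node.prems(3) have pe: "\<forall>e\<in>set es. 1 \<le> cnt e" and pc: "\<And>ch. ch \<in> set cs \<Longrightarrow> posc ch"
    by simp_all
  obtain e where e: "e \<in> set es" using ne by (cases es) auto
  have "1 \<le> cnt e" using pe e by auto
  also have "cnt e \<le> sum_list (map cnt es)" using e by (simp add: member_le_sum_list)
  also have "\<dots> \<le> ?m" by simp
  finally have m1: "1 \<le> ?m" .
  have ch2: "2 * mass ch \<le> im" if "ch \<in> set cs" for ch
  proof -
    from that obtain j where j: "j < length cs" "ch = cs ! j" by (auto simp: in_set_conv_nth)
    have "real (mass ch) \<le> real ?m / (D ?m + 1)" using chm j by simp
    also have "\<dots> \<le> real ?m / 2"
      using D1[rule_format, of ?m] by (intro divide_left_mono) auto
    finally have "2 * real (mass ch) \<le> real ?m" by linarith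
    then have "2 * mass ch \<le> ?m" by linarith
    then show ?thesis using imm by (simp only:)
  qed
  have chg: "\<forall>ch\<in>set cs. 2*mass ch \<le> im + 2*c \<and> 2*imof ch \<le> im + 2*c \<and> good ch"
  proof
    fix ch assume ch: "ch \<in> set cs"
    have "imof ch = mass ch" using fresh_imof chf ch by blast
    then show "2*mass ch \<le> im + 2*c \<and> 2*imof ch \<le> im + 2*c \<and> good ch"
      using ch2[OF ch] c0 Node.IH[OF ch] chi[OF ch] chf[OF ch] pc[OF ch] by simp
  qed
  have A: "4*c \<le> im" using c0 by simp
  have B: "1 \<le> im" using m1 imm by (simp only:)
  have C: "?m \<le> im + c" using imm c0 by (simp only: add_0_right order_refl)
  show ?case unfolding good.simps by (intro conjI A B C chg)
qed

lemma acc_mass: "acc o' t t' v \<Longrightarrow> mass t' \<le> mass t + 1"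
proof (induction rule: acc.induct)
  case (acc_leaf_ins x)
  then show ?case by (simp add: new_node_def)
next
  case (acc_found i es o' cs c im)
  have "sum_list (map cnt (es[i := upd_entry o' (es ! i)])) + cnt (es ! i) = sum_list (map cnt es) + cnt (upd_entry o' (es ! i))"
    by (rule sum_list_map_update) (use acc_found in simp)
  then show ?case by (simp add: upd_cnt)
next
  case (acc_down es o' j cs t' v c im)
  have "sum_list (map mass (cs[j := t'])) + mass (cs ! j) = sum_list (map mass cs) + mass t'"
    by (rule sum_list_map_update) (use acc_down in simp)
  then show ?case using acc_down by simp
qed auto

lemma acc_posc: "acc o' t t' v \<Longrightarrow> posc t \<Longrightarrow> posc t'"
proof (induction rule: acc.induct)
  case (acc_leaf_ins x)
  then show ?case by (simp add: new_node_def)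
next
  case (acc_found i es o' cs c im)
  then show ?case using set_update_subset_insert[of es i "upd_entry o' (es ! i)"]
    by (auto simp: upd_cnt)
next
  case (acc_down es o' j cs t' v c im)
  then show ?case using set_update_subset_insert[of cs j t'] by auto
qed auto

lemma g_step:
  assumes "good (Node es cs c im)" "ch \<in> set cs"
  shows "1 + g ch \<le> g (Node es cs c im)"
proof (cases ch)
  case Leaf
  then show ?thesis using assms LL_pos by simp
next
  case (Node es' cs' c' im')
  have "1 \<le> im'" "2 * im' \<le> im + 2 * c" "4 * c \<le> im"
    using assms Node by auto
  then have a: "1 \<le> real im'" and b: "4/3 * real im' \<le> real im" by linarith+
  have "ln (4/3 * real im') = LL + ln (real im')"
    using a unfolding LL_def by (subst ln_mult) auto
  moreover have "ln (4/3 * real im') \<le> ln (real im)"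
    using a b by (subst ln_le_cancel_iff) auto
  ultimately have "LL + ln (real im') \<le> ln (real im)" by simp
  then have "(LL + ln (real im')) / LL \<le> ln (real im) / LL"
    using LL_pos by (intro divide_right_mono) auto
  then have "1 + ln (real im') / LL \<le> ln (real im) / LL"
    using LL_pos by (simp add: add_divide_distrib)
  then show ?thesis using Node by simp
qed

lemma g_ge1: "good (Node es cs c im) \<Longrightarrow> 1 \<le> g (Node es cs c im)"
  using LL_pos by simp

lemma acc_visits: "acc o' t t' v \<Longrightarrow> good t \<Longrightarrow> real v \<le> g t"
proof (induction rule: acc.induct)
  case (acc_found i es o' cs c im)
  then show ?case using g_ge1[OF acc_found.prems] by simp
next
  case (acc_down es o' j cs t' v c im)
  have chin: "cs ! j \<in> set cs" using acc_down by simp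
  then have "good (cs ! j)" using acc_down.prems by auto
  then have "real v \<le> g (cs ! j)" using acc_down by simp
  then show ?case using g_step[OF acc_down.prems chin] by simp
qed auto



lemma acc_leaf: "acc o' Leaf t' v \<Longrightarrow> v = 0 \<and> (t' = Leaf \<or> (\<exists>x. t' = new_node x))"
  by (cases rule: acc.cases) auto

lemma rebuild_mass:
  assumes "ideal_gsat D R" "entries R = {e \<in> entries t2. \<not> snd (snd e)}"
  shows "mass R \<le> mass t2"
proof -
  have "mass R = sum cnt (entries R)" using ideal_mass[OF assms(1)] .
  also have "\<dots> \<le> sum cnt (entries t2)"
    by (rule sum_mono2) (use assms(2) finite_entries in auto)
  also have "\<dots> \<le> mass t2" by (rule sum_entries_le)
  finally show ?thesis .
qed

lemma rebuild_posc:
  assumes "posc t2" "entries R = {e \<in> entries t2. \<not> snd (snd e)}"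
  shows "posc R"
  using assms by (auto simp: posc_entries)

lemma step_mass: "step D o' t t' v \<Longrightarrow> mass t' \<le> mass t + 1 \<and> imof t' \<le> max (imof t) (mass t + 1)"
proof (induction rule: step.induct)
  case (step_leaf o' t' D)
  then show ?case using acc_leaf[OF step_leaf] by (auto simp: new_node_def)
next
  case (step_rebuild c im o' es cs t2 v D R)
  have "mass R \<le> mass t2" using rebuild_mass step_rebuild by blast
  moreover have "mass t2 \<le> mass (Node es cs c im) + 1" using acc_mass step_rebuild by blast
  ultimately show ?case using fresh_imof[OF step_rebuild(4)] by auto
next
  case (step_found c im i es o' cs D)
  have "sum_list (map cnt (es[i := upd_entry o' (es ! i)])) + cnt (es ! i) = sum_list (map cnt es) + cnt (upd_entry o' (es ! i))"
    by (rule sum_list_map_update) (use step_found in simp)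
  then show ?case by (simp add: upd_cnt)
next
  case (step_down c im es o' j cs D t' v)
  have "sum_list (map mass (cs[j := t'])) + mass (cs ! j) = sum_list (map mass cs) + mass t'"
    by (rule sum_list_map_update) (use step_down in simp)
  then show ?case using step_down by simp
qed

lemma step_posc: "step D o' t t' v \<Longrightarrow> posc t \<Longrightarrow> posc t'"
proof (induction rule: step.induct)
  case (step_leaf o' t' D)
  then show ?case using acc_leaf[OF step_leaf(1)] by (auto simp: new_node_def)
next
  case (step_rebuild c im o' es cs t2 v D R)
  then show ?case using acc_posc rebuild_posc by blast
next
  case (step_found c im i es o' cs D)
  then show ?case using set_update_subset_insert[of es i "upd_entry o' (es ! i)"]
    by (auto simp: upd_cnt)
next
  case (step_down c im es o' j cs D t' v)
  then show ?case using set_update_subset_insert[of cs j t'] by auto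
qed



lemma good_unf: "good (Node es cs c im) \<Longrightarrow> 4*c \<le> im \<and> 1 \<le> im \<and> mass (Node es cs c im) \<le> im + c \<and>
     (\<forall>ch\<in>set cs. 2*mass ch \<le> im + 2*c \<and> 2*imof ch \<le> im + 2*c \<and> good ch)"
  using iffD1[OF good.simps(2)[of es cs c im]] .

lemma posc_unf: "posc (Node es cs c im) \<Longrightarrow> (\<forall>e\<in>set es. 1 \<le> cnt e) \<and> (\<forall>ch\<in>set cs. posc ch)"
  using iffD1[OF posc.simps(2)[of es cs c im]] .

lemma step_good:
  shows "step D o' t t' v \<Longrightarrow> \<forall>m. 1 \<le> D m \<Longrightarrow> good t \<Longrightarrow> posc t \<Longrightarrow> good t'"
proof (induction rule: step.induct)
  case (step_leaf o' t' D)
  have "good (new_node x)" for x by (simp add: new_node_def)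
  then show ?case using acc_leaf[OF step_leaf(1)] by auto
next
  case (step_rebuild c im o' es cs t2 v D' R)
  have "posc R" using step_rebuild acc_posc rebuild_posc by blast
  then show ?case using fresh_good[of D'] step_rebuild by blast
next
  case (step_found c im i es o' D' cs)
  have h0: "sum_list (map cnt (es[i := upd_entry o' (es ! i)])) + cnt (es ! i) = sum_list (map cnt es) + cnt (upd_entry o' (es ! i))"
    by (rule sum_list_map_update) (use step_found in simp)
  have "real (4 * c + 4) \<le> real im" using step_found(1) by simp
  then have "4 * c + 4 \<le> im" by linarith
  then have A: "4 * Suc c \<le> im" by simp
  have gN: "4*c \<le> im \<and> 1 \<le> im \<and> mass (Node es cs c im) \<le> im + c \<and>
     (\<forall>ch\<in>set cs. 2*mass ch \<le> im + 2*c \<and> 2*imof ch \<le> im + 2*c \<and> good ch)"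
    using good_unf[OF step_found.prems(2)] .
  have CH: "\<forall>ch\<in>set cs. 2*mass ch \<le> im + 2*Suc c \<and> 2*imof ch \<le> im + 2*Suc c \<and> good ch"
  proof
    fix ch assume a: "ch \<in> set cs"
    then have "2*mass ch \<le> im + 2*c \<and> 2*imof ch \<le> im + 2*c \<and> good ch" using gN by blast
    then show "2*mass ch \<le> im + 2*Suc c \<and> 2*imof ch \<le> im + 2*Suc c \<and> good ch" by simp
  qed
  have mo: "mass (Node es cs c im) \<le> im + c" using gN by blast
  have M: "mass (Node (es[i := upd_entry o' (es ! i)]) cs (Suc c) im) \<le> im + Suc c"
  proof -
    have "mass (Node (es[i := upd_entry o' (es ! i)]) cs (Suc c) im) + cnt (es ! i) = mass (Node es cs c im) + cnt (upd_entry o' (es ! i))"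
      using h0 by simp
    then show ?thesis using mo upd_cnt[of o' "es ! i"] by linarith
  qed
  have one: "1 \<le> im" using gN by blast
  show ?case unfolding good.simps by (intro conjI A one M CH)
next
  case (step_down c im es o' j cs D' t' v)
  have h: "sum_list (map mass (cs[j := t'])) + mass (cs ! j) = sum_list (map mass cs) + mass t'"
    by (rule sum_list_map_update) (use step_down in simp)
  have "real (4 * c + 4) \<le> real im" using step_down(1) by simp
  then have "4 * c + 4 \<le> im" by linarith
  then have A: "4 * Suc c \<le> im" by simp
  have chin: "cs ! j \<in> set cs" using step_down by simp
  have gN: "4*c \<le> im \<and> 1 \<le> im \<and> mass (Node es cs c im) \<le> im + c \<and>
     (\<forall>ch\<in>set cs. 2*mass ch \<le> im + 2*c \<and> 2*imof ch \<le> im + 2*c \<and> good ch)"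
    using good_unf[OF step_down.prems(2)] .
  have pN: "(\<forall>e\<in>set es. 1 \<le> cnt e) \<and> (\<forall>ch\<in>set cs. posc ch)"
    using posc_unf[OF step_down.prems(3)] .
  have old: "2*mass (cs!j) \<le> im + 2*c \<and> 2*imof (cs!j) \<le> im + 2*c \<and> good (cs ! j)"
    using gN chin by blast
  have gch: "good (cs ! j)" "posc (cs ! j)" using old pN chin by blast+
  have gt': "good t'" using step_down.IH gch step_down.prems(1) by blast
  have mt: "mass t' \<le> mass (cs ! j) + 1 \<and> imof t' \<le> max (imof (cs ! j)) (mass (cs ! j) + 1)"
    using step_mass[OF step_down(5)] .
  have CH: "\<forall>ch\<in>set (cs[j := t']). 2*mass ch \<le> im + 2*Suc c \<and> 2*imof ch \<le> im + 2*Suc c \<and> good ch"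
  proof
    fix ch assume "ch \<in> set (cs[j := t'])"
    then have "ch = t' \<or> ch \<in> set cs" using set_update_subset_insert by fastforce
    then show "2*mass ch \<le> im + 2*Suc c \<and> 2*imof ch \<le> im + 2*Suc c \<and> good ch"
    proof
      assume "ch = t'"
      moreover have "2*mass t' \<le> im + 2*Suc c" using mt old by simp
      moreover have "2*imof t' \<le> im + 2*Suc c" using mt old by (simp add: max_def split: if_splits)
      ultimately show ?thesis using gt' by simp
    next
      assume a: "ch \<in> set cs"
      then have "2*mass ch \<le> im + 2*c \<and> 2*imof ch \<le> im + 2*c \<and> good ch" using gN by blast
      then show ?thesis by simp
    qed
  qed
  have mo: "mass (Node es cs c im) \<le> im + c" using gN by blast
  have M: "mass (Node es (cs[j := t']) (Suc c) im) \<le> im + Suc c"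
  proof -
    have "mass (Node es (cs[j := t']) (Suc c) im) + mass (cs ! j) = mass (Node es cs c im) + mass t'"
      using h by simp
    then show ?thesis using mo mt by linarith
  qed
  have one: "1 \<le> im" using gN by blast
  show ?case unfolding good.simps by (intro conjI A one M CH)
qed



lemma step_cost:
  "step D o' t t' v \<Longrightarrow> good t \<Longrightarrow> real v + 5 * real (csum t') \<le> 5 * real (csum t) + 6 * g t"
proof (induction rule: step.induct)
  case (step_leaf o' t' D)
  then show ?case using acc_leaf[OF step_leaf(1)] by (auto simp: new_node_def)
next
  case (step_rebuild c im o' es cs t2 v D' R)
  have cs0: "csum R = 0" using fresh_csum step_rebuild by blast
  have vg: "real v \<le> g (Node es cs c im)" using acc_visits step_rebuild by blast
  have g1: "1 \<le> g (Node es cs c im)" using g_ge1 step_rebuild by blast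
  have "mass t2 \<le> mass (Node es cs c im) + 1" using acc_mass step_rebuild by blast
  moreover have "mass (Node es cs c im) \<le> im + c" using step_rebuild.prems by (simp only: good.simps)
  moreover have "real im < real (4 * c + 4)" using step_rebuild(1) by simp
  then have "im < 4 * c + 4" by linarith
  ultimately have "mass t2 \<le> 5 * c + 4" by linarith
  moreover have "c \<le> csum (Node es cs c im)" by simp
  ultimately have "real (mass t2) \<le> 5 * real (csum (Node es cs c im)) + 4" by linarith
  then show ?case using cs0 vg g1 by simp
next
  case (step_found c im i es o' D' cs)
  then show ?case using g_ge1[OF step_found.prems] by simp
next
  case (step_down c im es o' j cs D' t' v)
  have h: "sum_list (map csum (cs[j := t'])) + csum (cs ! j) = sum_list (map csum cs) + csum t'"
    by (rule sum_list_map_update) (use step_down in simp)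
  have chin: "cs ! j \<in> set cs" using step_down by simp
  have gch: "good (cs ! j)" using step_down.prems chin by auto
  have IH: "real v + 5 * real (csum t') \<le> 5 * real (csum (cs ! j)) + 6 * g (cs ! j)"
    using step_down.IH gch by blast
  have gs: "1 + g (cs ! j) \<le> g (Node es cs c im)" using g_step[OF step_down.prems chin] .
  have hr: "real (sum_list (map csum (cs[j := t']))) + real (csum (cs ! j)) = real (sum_list (map csum cs)) + real (csum t')"
    using h by (metis of_nat_add)
  show ?case using IH gs hr by simp
qed



lemma g_bound: "good t \<Longrightarrow> imof t \<le> N \<Longrightarrow> 1 \<le> N \<Longrightarrow> g t \<le> 1 + ln (real N) / LL"
proof (cases t)
  case Leaf
  assume "1 \<le> N"
  then show ?thesis using Leaf LL_pos by simp
next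
  case (Node es cs c im)
  assume a: "good t" "imof t \<le> N"
  then have "1 \<le> im" "im \<le> N" using Node by auto
  then have "ln (real im) \<le> ln (real N)" by simp
  then have "ln (real im) / LL \<le> ln (real N) / LL" using LL_pos by (simp add: divide_right_mono)
  then show ?thesis using Node by simp
qed

lemma run_bound:
  "run D t ops t2 cost \<Longrightarrow> \<forall>m. 1 \<le> D m \<Longrightarrow> good t \<Longrightarrow> posc t \<Longrightarrow> mass t \<le> k \<Longrightarrow> imof t \<le> k
   \<Longrightarrow> k + length ops \<le> N
   \<Longrightarrow> real cost + 5 * real (csum t2) \<le> 5 * real (csum t) + 6 * real (length ops) * (1 + ln (real N) / LL)"
proof (induction arbitrary: k rule: run.induct)
  case (run_nil D t)
  then show ?case by simp
next
  case (run_cons D o' t t1 c1 ops t2 c2)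
  have s1: "real c1 + 5 * real (csum t1) \<le> 5 * real (csum t) + 6 * g t"
    using step_cost run_cons by blast
  have gb: "g t \<le> 1 + ln (real N) / LL" using g_bound run_cons.prems by simp
  have m: "mass t1 \<le> mass t + 1 \<and> imof t1 \<le> max (imof t) (mass t + 1)"
    using step_mass run_cons by blast
  have "good t1" using step_good run_cons by blast
  moreover have "posc t1" using step_posc run_cons by blast
  ultimately have IH: "real c2 + 5 * real (csum t2) \<le> 5 * real (csum t1) + 6 * real (length ops) * (1 + ln (real N) / LL)"
  proof -
    have "imof t1 \<le> k + 1" using m run_cons.prems by auto
    moreover have "mass t1 \<le> k + 1" using m run_cons.prems by auto
    ultimately show ?thesis using run_cons.IH[of "k+1"] run_cons.prems \<open>good t1\<close> \<open>posc t1\<close> by simp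
  qed
  define B where "B = 1 + ln (real N) / LL"
  have e: "6 * real (length (o' # ops)) * B = 6 * real (length ops) * B + 6 * B" by (simp add: algebra_simps)
  show ?case using s1 gb IH e unfolding B_def[symmetric] by simp
qed

theorem lemma2:
  fixes D :: "nat \<Rightarrow> real"
  assumes "sqrt_bounded D"
  shows "\<exists>C::real. \<forall>ops t cost. 2 \<le> length ops \<longrightarrow> run D Leaf ops t cost \<longrightarrow>
           real cost \<le> C * real (length ops) * ln (real (length ops))"
proof (intro exI allI impI)
  fix ops t cost
  assume n2: "2 \<le> length ops" and r: "run D Leaf ops t cost"
  let ?n = "real (length ops)"
  have D1: "\<forall>m. 1 \<le> D m" using assms unfolding sqrt_bounded_def by blast
  have "real cost + 5 * real (csum t) \<le> 5 * real (csum Leaf) + 6 * ?n * (1 + ln ?n / LL)"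
    using run_bound[OF r D1, of 0 "length ops"] by simp
  then have c: "real cost \<le> 6 * ?n * (1 + ln ?n / LL)" by simp
  have "(2::real) \<le> ?n" using n2 by simp
  then have l2: "ln 2 \<le> ln ?n" by (subst ln_le_cancel_iff) auto
  have l2p: "0 < ln (2::real)" by simp
  have "1 \<le> ln ?n / ln 2" using l2 l2p by simp
  then have "1 + ln ?n / LL \<le> ln ?n / ln 2 + ln ?n / LL" by simp
  also have "\<dots> = (1 / ln 2 + 1 / LL) * ln ?n" by (simp add: field_simps)
  finally have "6 * ?n * (1 + ln ?n / LL) \<le> 6 * ?n * ((1 / ln 2 + 1 / LL) * ln ?n)"
    by (intro mult_left_mono) auto
  with c show "real cost \<le> (6 * (1 / ln 2 + 1 / LL)) * ?n * ln ?n" by (simp add: algebra_simps)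
qed

end
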